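(* Let $\mathbf{p}_t(\mathrm{mod}\,2)$ denote the polynomial $\mathbf{p}_t$ with coefficients reduced modulo $2$ (an element of $(\mathbf{Z}/2)[t]$). Then $\mathbf{p}_t(\mathrm{mod}\,2)$ is a homotopy invariant of virtual knots: if two virtual knots are homotopic, they have the same value of $\mathbf{p}_t(\mathrm{mod}\,2)$.
   Context: A virtual knot diagram is an oriented closed curve immersed in the plane with finitely many transverse double points, each either a classical crossing (with over/under information) or a virtual crossing (encircled, carrying no over/under information). Virtual knots are equivalence classes of such diagrams under the classical Reidemeister moves and the virtual Reidemeister moves (V1, V2, V3 involving only virtual crossings, and the mixed move in which a strand containing only virtual crossings passes across a classical crossing). Two virtual knot diagrams are homotopic if they are related by these moves together with crossing changes (switching the over- and under-strand at a classical crossing). The sign $\operatorname{sign}(d)\in\{\pm1\}$ of a classical crossing $d$ is $+1$ if (direction of over-strand, direction of under-strand) is a positively oriented basis of the plane, $-1$ otherwise. Smoothing at a classical crossing $d$ (replacing it by two non-crossing arcs respecting orientation) yields a two-component virtual link; ordering its components $(1,2)$, set $i(d)=\sum_{x}\operatorname{sgn}(x)$ over classical crossings $x$ between the two components, with $\operatorname{sgn}(x)=+1$ if (tangent of component 1, tangent of component 2) at $x$ is positively oriented and $-1$ otherwise. Then $\mathbf{p}_t(K)=\sum_d\operatorname{sign}(d)(t^{|i(d)|}-1)\in\mathbf{Z}[t]$, the sum over all classical crossings $d$ of a diagram of $K$; this is an invariant of virtual knots. *)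

theory Defs
  imports "HOL-Library.Z2" "HOL-Computational_Algebra.Polynomial"
begin

text \<open>Virtual knots are modelled combinatorially by (signed) Gauss diagrams,
written as Gauss words. A letter (c, ov, pos) records a passage through the
classical crossing labelled c; ov = True iff the passage is along the
over-strand; pos = True iff the crossing has sign +1. The word is read
cyclically along the orientation of the knot. Virtual crossings do not
appear in a Gauss diagram (the virtual and mixed moves act trivially on it).\<close>

type_synonym letter = "nat \<times> bool \<times> bool"
type_synonym gword = "letter list"

definition labels :: "gword \<Rightarrow> nat set" where
  "labels w = fst ` set w"

definition wf_gauss :: "gword \<Rightarrow> bool" where
  "wf_gauss w \<longleftrightarrow> (\<forall>c \<in> labels w. \<exists>s. count_list w (c, True, s) = 1
        \<and> count_list w (c, False, s) = 1
        \<and> length (filter (\<lambda>l. fst l = c) w) = 2)"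

text \<open>Oriented Reidemeister III configurations: three strands T (top), M (middle),
B (bottom), realised by three oriented lines; crossings a = T\<inter>M, b = T\<inter>B,
c = M\<inter>B. om encodes the orientation of the triangle (a,b,c); tT tM tB encode
whether each line runs counterclockwise along its edge of the triangle.
Result: the pairs of consecutive letters along T, along M and along B.\<close>

definition r3_pairs :: "bool \<Rightarrow> bool \<Rightarrow> bool \<Rightarrow> bool \<Rightarrow> nat \<Rightarrow> nat \<Rightarrow> nat
    \<Rightarrow> gword \<times> gword \<times> gword" where
  "r3_pairs om tT tM tB a b c =
     (let sa = (if om then tT \<noteq> tM else tT = tM);
          sb = (if om then tT = tB else tT \<noteq> tB);
          sc = (if om then tM \<noteq> tB else tM = tB);
          aT = (a, True, sa); bT = (b, True, sb);
          aM = (a, False, sa); cM = (c, True, sc);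
          bB = (b, False, sb); cB = (c, False, sc)
      in if om then
           ((if tT then [aT, bT] else [bT, aT]),
            (if tM then [cM, aM] else [aM, cM]),
            (if tB then [bB, cB] else [cB, bB]))
         else
           ((if tT then [bT, aT] else [aT, bT]),
            (if tM then [aM, cM] else [cM, aM]),
            (if tB then [cB, bB] else [bB, cB])))"

definition rot_move :: "gword \<Rightarrow> gword \<Rightarrow> bool" where
  "rot_move w w' \<longleftrightarrow> w' = rotate1 w"

definition rename_move :: "gword \<Rightarrow> gword \<Rightarrow> bool" where
  "rename_move w w' \<longleftrightarrow> (\<exists>f. inj_on f (labels w) \<and>
       w' = map (\<lambda>(c, ov, s). (f c, ov, s)) w)"

definition R1_move :: "gword \<Rightarrow> gword \<Rightarrow> bool" where
  "R1_move w w' \<longleftrightarrow> (\<exists>u v c ov s. w = u @ v \<and> c \<notin> labels w \<and>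
       w' = u @ [(c, ov, s), (c, \<not> ov, s)] @ v)"

definition R2_move :: "gword \<Rightarrow> gword \<Rightarrow> bool" where
  "R2_move w w' \<longleftrightarrow> (\<exists>u v x c d s. w = u @ v @ x \<and> c \<noteq> d \<and>
       c \<notin> labels w \<and> d \<notin> labels w \<and>
       (w' = u @ [(c, True, s), (d, True, \<not> s)] @ v @ [(c, False, s), (d, False, \<not> s)] @ x \<or>
        w' = u @ [(c, True, s), (d, True, \<not> s)] @ v @ [(d, False, \<not> s), (c, False, s)] @ x))"

definition R3_move :: "gword \<Rightarrow> gword \<Rightarrow> bool" where
  "R3_move w w' \<longleftrightarrow> (\<exists>u v y z X Y Z om tT tM tB a b c PT PM PB.
       a \<noteq> b \<and> a \<noteq> c \<and> b \<noteq> c \<and>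
       r3_pairs om tT tM tB a b c = (PT, PM, PB) \<and>
       mset [X, Y, Z] = mset [PT, PM, PB] \<and>
       w = u @ X @ v @ Y @ y @ Z @ z \<and>
       w' = u @ rev X @ v @ rev Y @ y @ rev Z @ z)"

definition cc_move :: "gword \<Rightarrow> gword \<Rightarrow> bool" where
  "cc_move w w' \<longleftrightarrow> (\<exists>c \<in> labels w.
       w' = map (\<lambda>(d, ov, s). if d = c then (d, \<not> ov, \<not> s) else (d, ov, s)) w)"

definition homotopy_step :: "gword \<Rightarrow> gword \<Rightarrow> bool" where
  "homotopy_step w w' \<longleftrightarrow> wf_gauss w \<and> wf_gauss w' \<and>
     (rot_move w w' \<or> rename_move w w' \<or> R1_move w w' \<or> R2_move w w' \<or>
      R3_move w w' \<or> cc_move w w')"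

definition homotopic :: "gword \<Rightarrow> gword \<Rightarrow> bool" where
  "homotopic = equivclp homotopy_step"

text \<open>Smoothing at crossing d: one component is the part of the curve strictly
between the two passages through d. i(d) = sum over crossings x between the two
components of sgn(x) (component 1 = this arc): +sign(x) if the arc passes over
at x, -sign(x) if it passes under.\<close>

definition arc :: "gword \<Rightarrow> nat \<Rightarrow> gword" where
  "arc w d = takeWhile (\<lambda>l. fst l \<noteq> d) (tl (dropWhile (\<lambda>l. fst l \<noteq> d) w))"

definition sgnval :: "bool \<Rightarrow> int" where
  "sgnval b = (if b then 1 else -1)"

definition crossing_index :: "gword \<Rightarrow> nat \<Rightarrow> int" where
  "crossing_index w d =
     (let A = arc w d in
      sum_list (map (\<lambda>(x, ov, s). sgnval s * sgnval ov)
        (filter (\<lambda>l. length (filter (\<lambda>m. fst m = fst l) A) = 1) A)))"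

text \<open>p_t(K) = sum over crossings d of sign(d) (t^|i(d)| - 1); each crossing is
counted once via its over-passage.\<close>
definition p_t :: "gword \<Rightarrow> int poly" where
  "p_t w = sum_list (map (\<lambda>(d, ov, s).
       smult (sgnval s) (monom 1 (nat \<bar>crossing_index w d\<bar>) - 1))
     (filter (\<lambda>l. fst (snd l)) w))"

definition p_t_mod2 :: "gword \<Rightarrow> bit poly" where
  "p_t_mod2 w = map_poly of_int (p_t w)"

end

theory Submission
  imports Defs
begin

definition val :: "letter \<Rightarrow> int" where
  "val l = sgnval (snd (snd l)) * sgnval (fst (snd l))"

definition Vs :: "gword \<Rightarrow> int" where
  "Vs A = sum_list (map val A)"

lemma Vs_simps[simp]: "Vs [] = 0" "Vs (l # A) = val l + Vs A" "Vs (A @ B) = Vs A + Vs B"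
  by (simp_all add: Vs_def)

lemma Vs_rev[simp]: "Vs (rev A) = Vs A"
  by (induction A) auto

lemma Vs_sum_mset: "Vs A = sum_mset (image_mset val (mset A))"
  by (induction A) auto

lemma Vs_mset: "mset A = mset B \<Longrightarrow> Vs A = Vs B"
  by (simp add: Vs_sum_mset)

lemma val_simp[simp]: "val (c, ov, s) = sgnval s * sgnval ov"
  by (simp add: val_def)

lemma msub_eq: "A \<subseteq># B \<Longrightarrow> size B \<le> size A \<Longrightarrow> A = B"
  using mset_subset_size[of A B] by (auto simp: subset_mset.le_less)

lemma group_sum: "Vs B = (\<Sum>c\<in>fst ` set B. Vs (filter (\<lambda>l. fst l = c) B))"
proof (induction B)
  case Nil then show ?case by simp
next
  case (Cons a B)
  have fin: "finite (fst ` set B)" by simp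
  show ?case
  proof (cases "fst a \<in> fst ` set B")
    case True
    then have e: "fst ` set (a # B) = fst ` set B" by auto
    have "(\<Sum>c\<in>fst ` set B. Vs (filter (\<lambda>l. fst l = c) (a # B)))
        = (\<Sum>c\<in>fst ` set B. (if c = fst a then val a else 0) + Vs (filter (\<lambda>l. fst l = c) B))"
      by (rule sum.cong) auto
    also have "\<dots> = val a + Vs B"
      using True fin by (simp add: sum.distrib Cons)
    finally show ?thesis using e by simp
  next
    case False
    have "(\<Sum>c\<in>fst ` set (a#B). Vs (filter (\<lambda>l. fst l = c) (a # B)))
       = Vs (filter (\<lambda>l. fst l = fst a) (a # B)) + (\<Sum>c\<in>fst ` set B. Vs (filter (\<lambda>l. fst l = c) (a # B)))"
      using False fin by simp
    also have "Vs (filter (\<lambda>l. fst l = fst a) (a # B)) = val a"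
    proof -
      have "filter (\<lambda>l. fst l = fst a) B = []" using False by (auto simp: filter_empty_conv intro: rev_image_eqI)
      then show ?thesis by simp
    qed
    also have "(\<Sum>c\<in>fst ` set B. Vs (filter (\<lambda>l. fst l = c) (a # B)))
        = (\<Sum>c\<in>fst ` set B. Vs (filter (\<lambda>l. fst l = c) B))"
      by (rule sum.cong) (use False in auto)
    finally show ?thesis using Cons by simp
  qed
qed

lemma wf_group:
  assumes "wf_gauss w" "c \<in> labels w"
  shows "\<exists>s. mset (filter (\<lambda>l. fst l = c) w) = {#(c,True,s),(c,False,s)#}"
proof -
  from assms obtain s where c1: "count_list w (c, True, s) = 1" and c2: "count_list w (c, False, s) = 1"
    and l2: "length (filter (\<lambda>l. fst l = c) w) = 2"
    unfolding wf_gauss_def by blast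
  let ?M = "mset (filter (\<lambda>l. fst l = c) w)"
  have sub: "{#(c,True,s),(c,False,s)#} \<subseteq># ?M"
  proof (rule mset_subset_eqI)
    fix x
    show "count {#(c,True,s),(c,False,s)#} x \<le> count ?M x"
      using c1 c2 by (auto simp: count_mset)
  qed
  have "size ?M = 2" using l2 by (metis size_mset)
  then have "{#(c,True,s),(c,False,s)#} = ?M"
    using msub_eq[OF sub] by simp
  then show ?thesis by metis
qed

lemma V_zero:
  assumes wf: "wf_gauss w" and sub: "mset A \<subseteq># mset w"
    and two: "\<forall>c\<in>fst ` set A. length (filter (\<lambda>l. fst l = c) A) \<noteq> 1"
  shows "Vs A = 0"
proof -
  have "Vs (filter (\<lambda>l. fst l = c) A) = 0" if c: "c \<in> fst ` set A" for c
  proof -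
    have "set A \<subseteq> set w" using set_mset_mono[OF sub] by simp
    then have "c \<in> labels w" using c unfolding labels_def by blast
    then obtain s where s: "mset (filter (\<lambda>l. fst l = c) w) = {#(c,True,s),(c,False,s)#}"
      using wf_group wf by blast
    have sub2: "mset (filter (\<lambda>l. fst l = c) A) \<subseteq># {#(c,True,s),(c,False,s)#}"
      using multiset_filter_mono[OF sub, of "\<lambda>l. fst l = c"] s by simp
    have ne: "filter (\<lambda>l. fst l = c) A \<noteq> []" using c by (auto simp: filter_empty_conv)
    have "length (filter (\<lambda>l. fst l = c) A) \<le> 2"
      using size_mset_mono[OF sub2] by (simp del: mset_filter)
    moreover have "length (filter (\<lambda>l. fst l = c) A) \<noteq> 0" using ne by simp
    moreover have "length (filter (\<lambda>l. fst l = c) A) \<noteq> 1" using two c by blast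
    ultimately have "length (filter (\<lambda>l. fst l = c) A) = 2" by linarith
    then have "mset (filter (\<lambda>l. fst l = c) A) = {#(c,True,s),(c,False,s)#}"
      using msub_eq[OF sub2] by (simp del: mset_filter)
    then have "Vs (filter (\<lambda>l. fst l = c) A) = Vs [(c,True,s),(c,False,s)]"
      by (intro Vs_mset) simp
    then show ?thesis by (simp add: sgnval_def)
  qed
  then show ?thesis by (subst group_sum) simp
qed

lemma Vs_filter_split: "Vs (filter P A) + Vs (filter (\<lambda>x. \<not> P x) A) = Vs A"
  by (induction A) auto

lemma ci_V_gen:
  assumes wf: "wf_gauss w" and sub: "mset A \<subseteq># mset w"
  shows "sum_list (map (\<lambda>(x, ov, s). sgnval s * sgnval ov)
        (filter (\<lambda>l. length (filter (\<lambda>m. fst m = fst l) A) = 1) A)) = Vs A"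
proof -
  let ?P = "\<lambda>l. length (filter (\<lambda>m. fst m = fst l) A) = 1"
  have f: "(\<lambda>(x, ov, s). sgnval s * sgnval ov) = val" by (auto simp: fun_eq_iff)
  let ?B = "filter (\<lambda>x. \<not> ?P x) A"
  have "Vs ?B = 0"
  proof (rule V_zero[OF wf])
    have "mset ?B \<subseteq># mset A" by (simp add: multiset_filter_subset)
    then show "mset ?B \<subseteq># mset w" using sub by (rule subset_mset.order_trans)
    show "\<forall>c\<in>fst ` set ?B. length (filter (\<lambda>l. fst l = c) ?B) \<noteq> 1"
    proof
      fix c assume "c \<in> fst ` set ?B"
      then have nc: "length (filter (\<lambda>m. fst m = c) A) \<noteq> 1" by auto
      have "filter (\<lambda>l. fst l = c) ?B = filter (\<lambda>l. fst l = c) A"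
        unfolding filter_filter using nc by (intro filter_cong) auto
      then show "length (filter (\<lambda>l. fst l = c) ?B) \<noteq> 1" using nc by simp
    qed
  qed
  then show ?thesis using Vs_filter_split[of ?P A] unfolding f Vs_def by simp
qed

lemma mset_arc: "mset (arc w d) \<subseteq># mset w"
proof -
  let ?P = "\<lambda>l. fst l \<noteq> d"
  have a: "mset (takeWhile ?P xs) \<subseteq># mset xs" for xs :: gword
    by (metis mset_append mset_subset_eq_add_left takeWhile_dropWhile_id)
  have b: "mset (dropWhile ?P xs) \<subseteq># mset xs" for xs :: gword
    by (metis mset_append mset_subset_eq_add_right takeWhile_dropWhile_id)
  have c: "mset (tl xs) \<subseteq># mset xs" for xs :: gword
    by (cases xs) auto
  show ?thesis unfolding arc_def
    using subset_mset.order_trans[OF a subset_mset.order_trans[OF c b]] .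
qed

lemma ci_V: "wf_gauss w \<Longrightarrow> crossing_index w d = Vs (arc w d)"
  unfolding crossing_index_def Let_def using ci_V_gen mset_arc by blast


definition tm :: "nat \<Rightarrow> bit poly" where
  "tm n = monom 1 n + 1"

definition Q :: "gword \<Rightarrow> bit poly" where
  "Q w = (\<Sum>d\<in>labels w. tm (nat \<bar>Vs (arc w d)\<bar>))"

lemma map_poly_of_int_add:
  "map_poly (of_int :: int \<Rightarrow> bit) (p + q) = map_poly of_int p + map_poly of_int q"
  by (rule poly_eqI) (simp add: coeff_map_poly)

lemma map_poly_of_int_sum_list:
  "map_poly (of_int :: int \<Rightarrow> bit) (sum_list (map g xs)) = sum_list (map (\<lambda>x. map_poly of_int (g x)) xs)"
  by (induction xs) (simp_all add: map_poly_of_int_add)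

lemma map_poly_term:
  "map_poly (of_int :: int \<Rightarrow> bit) (smult (sgnval s) (monom 1 n - 1)) = tm n"
  unfolding tm_def
  by (rule poly_eqI) (auto simp: coeff_map_poly coeff_monom sgnval_def coeff_1)

lemma wf_mem:
  assumes "wf_gauss w" "l \<in> set w"
  shows "\<exists>s. mset (filter (\<lambda>m. fst m = fst l) w) = {#(fst l,True,s),(fst l,False,s)#}"
  using wf_group[OF assms(1)] assms(2) unfolding labels_def by blast

lemma wf_mem2:
  assumes "wf_gauss w" "l \<in> set w"
  obtains s where "mset (filter (\<lambda>m. fst m = fst l) w) = {#(fst l,True,s),(fst l,False,s)#}"
    "l = (fst l, True, s) \<or> l = (fst l, False, s)"
proof -
  obtain s where s: "mset (filter (\<lambda>m. fst m = fst l) w) = {#(fst l,True,s),(fst l,False,s)#}"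
    using wf_mem[OF assms] by blast
  have "l \<in># mset (filter (\<lambda>m. fst m = fst l) w)" using assms(2) by simp
  then have "l \<in># {#(fst l,True,s),(fst l,False,s)#}" unfolding s .
  then have "l = (fst l, True, s) \<or> l = (fst l, False, s)" by auto
  then show ?thesis using that s by blast
qed

lemma over_distinct:
  assumes wf: "wf_gauss w"
  shows "distinct (map fst (filter (\<lambda>l. fst (snd l)) w))"
proof -
  let ?L = "filter (\<lambda>l. fst (snd l)) w"
  have inj: "inj_on fst (set ?L)"
  proof (rule inj_onI)
    fix x y assume x: "x \<in> set ?L" and y: "y \<in> set ?L" and e: "fst x = fst y"
    obtain s where s: "mset (filter (\<lambda>m. fst m = fst x) w) = {#(fst x,True,s),(fst x,False,s)#}"
      "x = (fst x, True, s) \<or> x = (fst x, False, s)"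
      using wf_mem2[OF wf, of x] x by auto
    have "y \<in># mset (filter (\<lambda>m. fst m = fst x) w)" using y e by auto
    then have "y \<in># {#(fst x,True,s),(fst x,False,s)#}" unfolding s(1) .
    then have "y = (fst x, True, s) \<or> y = (fst x, False, s)" by auto
    then show "x = y" using s(2) x y by (cases x; cases y; auto)
  qed
  have "count (mset ?L) x \<le> 1" for x
  proof (cases "x \<in> set w")
    case False then have "count (mset w) x = 0" by (simp add: count_eq_zero_iff)
    moreover have "count (mset ?L) x \<le> count (mset w) x" by simp
    ultimately show ?thesis by linarith
  next
    case True
    obtain s where s: "mset (filter (\<lambda>m. fst m = fst x) w) = {#(fst x,True,s),(fst x,False,s)#}"
      using wf_mem[OF wf True] by blast
    have "count (mset ?L) x \<le> count (mset w) x" by simp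
    also have "count (mset w) x = count (mset (filter (\<lambda>m. fst m = fst x) w)) x" by simp
    also have "\<dots> \<le> 1" unfolding s by (cases x) auto
    finally show ?thesis .
  qed
  then have "\<forall>a. count (mset ?L) a = (if a \<in> set ?L then 1 else 0)"
  proof (intro allI)
    fix a
    have "a \<in> set ?L \<longleftrightarrow> 0 < count (mset ?L) a"
      by (simp only: count_greater_zero_iff set_mset_mset)
    then show "count (mset ?L) a = (if a \<in> set ?L then 1 else 0)"
      using \<open>\<And>x. count (mset ?L) x \<le> 1\<close>[of a] by (auto simp del: count_mset)
  qed
  then have "distinct ?L" by (rule iffD2[OF distinct_count_atmost_1])
  then show ?thesis using inj by (simp add: distinct_map)
qed

lemma over_set:
  assumes wf: "wf_gauss w"
  shows "set (map fst (filter (\<lambda>l. fst (snd l)) w)) = labels w"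
proof
  show "set (map fst (filter (\<lambda>l. fst (snd l)) w)) \<subseteq> labels w" unfolding labels_def by auto
  show "labels w \<subseteq> set (map fst (filter (\<lambda>l. fst (snd l)) w))"
  proof
    fix c assume c: "c \<in> labels w"
    obtain s where "mset (filter (\<lambda>l. fst l = c) w) = {#(c,True,s),(c,False,s)#}"
      using wf_group[OF wf c] by blast
    then have "(c,True,s) \<in># mset (filter (\<lambda>l. fst l = c) w)" by simp
    then have "(c,True,s) \<in> set w" by simp
    then show "c \<in> set (map fst (filter (\<lambda>l. fst (snd l)) w))" by force
  qed
qed

lemma p_t_mod2_Q:
  assumes wf: "wf_gauss w"
  shows "p_t_mod2 w = Q w"
proof -
  let ?L = "filter (\<lambda>l. fst (snd l)) w"
  let ?g = "\<lambda>d. tm (nat \<bar>Vs (arc w d)\<bar>)"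
  have "p_t_mod2 w = sum_list (map (\<lambda>l. ?g (fst l)) ?L)"
    unfolding p_t_mod2_def p_t_def map_poly_of_int_sum_list
    by (intro arg_cong[where f=sum_list] map_cong refl)
       (auto simp: map_poly_term ci_V[OF wf])
  also have "\<dots> = sum_list (map ?g (map fst ?L))" by (simp add: comp_def)
  also have "\<dots> = sum ?g (set (map fst ?L))"
    by (rule sum_list_distinct_conv_sum_set[OF over_distinct[OF wf]])
  also have "\<dots> = Q w" unfolding Q_def over_set[OF wf] ..
  finally show ?thesis .
qed


lemma finite_labels[simp]: "finite (labels w)"
  by (simp add: labels_def)

lemma labels_append[simp]: "labels (a @ b) = labels a \<union> labels b"
  and labels_Cons[simp]: "labels (l # b) = insert (fst l) (labels b)"
  and labels_Nil[simp]: "labels [] = {}"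
  by (auto simp: labels_def)

lemma set_tl_sub: "set (tl xs) \<subseteq> set xs"
  by (cases xs) auto

lemma arc_skip: "d \<notin> fst ` set p \<Longrightarrow> arc (p @ r) d = arc r d"
  unfolding arc_def by (subst dropWhile_append2) auto

lemma arc_hit: "fst a = d \<Longrightarrow> arc (a # r) d = takeWhile (\<lambda>l. fst l \<noteq> d) r"
  unfolding arc_def by simp

lemma arc_Cons_skip: "fst a \<noteq> d \<Longrightarrow> arc (a # r) d = arc r d"
  unfolding arc_def by simp

lemma tw_skip: "d \<notin> fst ` set p \<Longrightarrow>
    takeWhile (\<lambda>l. fst l \<noteq> d) (p @ r) = p @ takeWhile (\<lambda>l. fst l \<noteq> d) r"
  by (subst takeWhile_append2) auto

lemma tw_stop: "d \<in> fst ` set p \<Longrightarrow>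
    takeWhile (\<lambda>l. fst l \<noteq> d) (p @ r) = takeWhile (\<lambda>l. fst l \<noteq> d) p"
proof -
  assume "d \<in> fst ` set p"
  then obtain z where z: "z \<in> set p" "\<not> (fst z \<noteq> d)" by auto
  show ?thesis by (rule takeWhile_append1[where P="\<lambda>l. fst l \<noteq> d", OF z])
qed

lemma piece:
  assumes "d \<notin> fst ` set p" "d \<notin> fst ` set q" "Vs p = Vs q"
  shows "Vs (arc (x @ p @ y) d) = Vs (arc (x @ q @ y) d)"
proof (cases "d \<in> fst ` set x")
  case False
  then show ?thesis using assms by (simp add: arc_skip)
next
  case True
  let ?P = "\<lambda>l. fst l \<noteq> d"
  have ex: "\<exists>z\<in>set x. \<not> ?P z" using True by auto
  then obtain z0 where z0: "z0 \<in> set x" "\<not> ?P z0" by blast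
  have dw: "dropWhile ?P (x @ r) = dropWhile ?P x @ r" for r
    by (rule dropWhile_append1[where P="?P", OF z0])
  have ne: "dropWhile ?P x \<noteq> []" using ex by (simp add: dropWhile_eq_Nil_conv)
  define t where "t = tl (dropWhile ?P x)"
  have arc_eq: "arc (x @ r) d = takeWhile ?P (t @ r)" for r
    unfolding arc_def dw t_def using ne by (simp add: tl_append2)
  show ?thesis
  proof (cases "d \<in> fst ` set t")
    case True
    then show ?thesis unfolding arc_eq by (simp add: tw_stop)
  next
    case False
    then show ?thesis unfolding arc_eq using assms by (simp add: tw_skip)
  qed
qed

lemma arc_map_gen:
  assumes "\<forall>l\<in>set w. (fst (F l) = e) \<longleftrightarrow> (fst l = d)"
  shows "arc (map F w) e = map F (arc w d)"
proof -
  have 1: "dropWhile (\<lambda>l. fst l \<noteq> e) (map F w) = map F (dropWhile (\<lambda>l. fst l \<noteq> d) w)"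
    unfolding dropWhile_map using assms by (intro arg_cong[where f="map F"] dropWhile_cong) auto
  have 2: "set (tl (dropWhile (\<lambda>l. fst l \<noteq> d) w)) \<subseteq> set w"
  proof -
    have "set (dropWhile (\<lambda>l. fst l \<noteq> d) w) \<subseteq> set w" by (auto dest: set_dropWhileD)
    then show ?thesis by (rule subset_trans[OF set_tl_sub])
  qed
  show ?thesis unfolding arc_def 1 map_tl[symmetric] takeWhile_map
    using assms 2 by (intro arg_cong[where f="map F"] takeWhile_cong) auto
qed

lemma Vs_map: "(\<And>l. val (F l) = val l) \<Longrightarrow> Vs (map F A) = Vs A"
  by (induction A) auto

lemma Q_cc:
  assumes "cc_move w w'"
  shows "Q w = Q w'"
proof -
  obtain c where w': "w' = map (\<lambda>(d, ov, s). if d = c then (d, \<not> ov, \<not> s) else (d, ov, s)) w"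
    using assms unfolding cc_move_def by blast
  define G :: "letter \<Rightarrow> letter" where "G = (\<lambda>(d, ov, s). if d = c then (d, \<not> ov, \<not> s) else (d, ov, s))"
  have fG: "fst (G l) = fst l" for l unfolding G_def by (cases l) auto
  have vG: "val (G l) = val l" for l unfolding G_def by (cases l) (auto simp: sgnval_def)
  have lab: "labels w' = labels w" unfolding w' G_def[symmetric] labels_def using fG
    by (simp add: image_image)
  have "Vs (arc w' d) = Vs (arc w d)" for d
    unfolding w' G_def[symmetric] using fG by (subst arc_map_gen[where d=d]) (auto intro: Vs_map vG)
  then show ?thesis unfolding Q_def lab by simp
qed

lemma Q_rename:
  assumes "rename_move w w'"
  shows "Q w = Q w'"
proof -
  obtain f where inj: "inj_on f (labels w)" and w': "w' = map (\<lambda>(c, ov, s). (f c, ov, s)) w"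
    using assms unfolding rename_move_def by blast
  define F :: "letter \<Rightarrow> letter" where "F = (\<lambda>(c, ov, s). (f c, ov, s))"
  have fF: "fst (F l) = f (fst l)" for l unfolding F_def by (cases l) auto
  have vF: "val (F l) = val l" for l unfolding F_def by (cases l) auto
  have lab: "labels w' = f ` labels w" unfolding w' F_def[symmetric] labels_def using fF
    by (simp add: image_image)
  have "Vs (arc w' (f d)) = Vs (arc w d)" if d: "d \<in> labels w" for d
  proof -
    have "\<forall>l\<in>set w. (fst (F l) = f d) \<longleftrightarrow> (fst l = d)"
      using inj d unfolding fF by (auto simp: labels_def inj_on_def)
    then show ?thesis unfolding w' F_def[symmetric]
      by (subst arc_map_gen[where d=d]) (auto intro: Vs_map vF)
  qed
  then show ?thesis unfolding Q_def lab sum.reindex[OF inj] by (intro sum.cong) auto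
qed

lemma count2:
  assumes "wf_gauss w" "d \<in> labels w"
  shows "length (filter (\<lambda>l. fst l = d) w) = 2"
  using assms unfolding wf_gauss_def by blast

lemma arc_append_late:
  assumes "2 \<le> length (filter (\<lambda>l. fst l = d) r)"
  shows "arc (r @ y) d = arc r d"
proof -
  have "filter (\<lambda>l. fst l = d) r \<noteq> []" using assms by auto
  then have exr: "\<exists>x\<in>set r. fst x = d" by (auto simp: filter_empty_conv)
  obtain p a q where r: "r = p @ a # q" and a: "fst a = d" and p: "\<forall>z\<in>set p. fst z \<noteq> d"
    using split_list_first_prop[OF exr] by blast
  have pn: "d \<notin> fst ` set p" using p by auto
  have "length (filter (\<lambda>l. fst l = d) r) = length (filter (\<lambda>l. fst l = d) q) + 1"
    using r a p by (simp add: filter_empty_conv)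
  then have "filter (\<lambda>l. fst l = d) q \<noteq> []" using assms by auto
  then have "d \<in> fst ` set q" by (auto simp: filter_empty_conv)
  then show ?thesis unfolding r using pn a by (simp add: arc_skip arc_hit tw_stop)
qed

lemma Vs_wf_zero:
  assumes wf: "wf_gauss w"
  shows "Vs w = 0"
  using V_zero[OF wf] count2[OF wf] unfolding labels_def by fastforce

lemma Q_rot:
  assumes wf: "wf_gauss w" and "rot_move w w'"
  shows "Q w = Q w'"
proof (cases w)
  case Nil
  then show ?thesis using assms by (simp add: rot_move_def)
next
  case (Cons l r)
  have w': "w' = r @ [l]" using assms Cons by (simp add: rot_move_def)
  have lab: "labels w' = labels w" using w' Cons by auto
  have "\<bar>Vs (arc w' d)\<bar> = \<bar>Vs (arc w d)\<bar>" if d: "d \<in> labels w" for d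
  proof (cases "fst l = d")
    case False
    have "length (filter (\<lambda>l. fst l = d) r) = 2" using count2[OF wf d] Cons False by simp
    then have "arc w' d = arc r d" unfolding w' by (intro arc_append_late) simp
    then show ?thesis using Cons False by (simp add: arc_Cons_skip)
  next
    case True
    have c2: "length (filter (\<lambda>l. fst l = d) r) = 1" using count2[OF wf d] Cons True by simp
    then have "filter (\<lambda>l. fst l = d) r \<noteq> []" by auto
    then have exr: "\<exists>x\<in>set r. fst x = d" by (auto simp: filter_empty_conv)
    obtain p a q where r: "r = p @ a # q" and a: "fst a = d" and p: "\<forall>z\<in>set p. fst z \<noteq> d"
      using split_list_first_prop[OF exr] by blast
    have pn: "d \<notin> fst ` set p" using p by auto
    have fq: "filter (\<lambda>l. fst l = d) q = []" using c2 r a p by (simp add: filter_empty_conv)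
    then have qn: "d \<notin> fst ` set q" by (auto simp: filter_empty_conv)
    have arcw: "arc w d = p" unfolding Cons r using True a pn
      by (simp add: arc_hit tw_skip)
    have arcw': "arc w' d = q" unfolding w' r using True a pn qn
      by (simp add: arc_skip arc_hit tw_skip)
    have "filter (\<lambda>m. fst m = d) w = [l, a]" unfolding Cons r using True a p fq
      by (simp add: filter_empty_conv)
    moreover have "l \<in> set w" using Cons by simp
    ultimately obtain s where s: "mset [l, a] = {#(d,True,s),(d,False,s)#}"
      using wf_mem[OF wf] True by fastforce
    have "val l + val a = 0"
    proof -
      have "Vs [l, a] = Vs [(d,True,s),(d,False,s)]" using s by (intro Vs_mset) simp
      then show ?thesis by (simp add: sgnval_def)
    qed
    moreover have "Vs w = 0" by (rule Vs_wf_zero[OF wf])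
    ultimately have "Vs q = - Vs p" unfolding Cons r by simp
    then show ?thesis using arcw arcw' by simp
  qed
  then show ?thesis unfolding Q_def lab by simp
qed


lemma sgnval_simps[simp]: "sgnval True = 1" "sgnval False = -1"
  by (simp_all add: sgnval_def)

lemma perm3:
  assumes "mset [X, Y, Z] = mset [A, B, C]"
  shows "(X,Y,Z) \<in> {(A,B,C),(A,C,B),(B,A,C),(B,C,A),(C,A,B),(C,B,A)}"
  using assms by (auto simp: add_eq_conv_ex)

lemma R3_abc:
  assumes ne: "a \<noteq> b" "a \<noteq> c" "b \<noteq> c"
    and r3: "r3_pairs om tT tM tB a b c = (PT, PM, PB)"
    and perm: "(X,Y,Z) \<in> {(PT,PM,PB),(PT,PB,PM),(PM,PT,PB),(PM,PB,PT),(PB,PT,PM),(PB,PM,PT)}"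
    and nu: "a \<notin> fst ` set u" "b \<notin> fst ` set u" "c \<notin> fst ` set u"
    and nv: "a \<notin> fst ` set v" "b \<notin> fst ` set v" "c \<notin> fst ` set v"
    and ny: "a \<notin> fst ` set y" "b \<notin> fst ` set y" "c \<notin> fst ` set y"
    and nz: "a \<notin> fst ` set z" "b \<notin> fst ` set z" "c \<notin> fst ` set z"
    and d: "d \<in> {a, b, c}"
  shows "Vs (arc (u @ X @ v @ Y @ y @ Z @ z) d) = Vs (arc (u @ rev X @ v @ rev Y @ y @ rev Z @ z) d)"
  using perm d r3 ne nu nv ny nz
  by (cases om; cases tT; cases tM; cases tB;
      auto simp: r3_pairs_def Let_def arc_skip arc_hit arc_Cons_skip tw_skip)


lemma bitpoly_double: "(x :: bit poly) + x = 0"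
proof (rule poly_eqI)
  fix n
  have "coeff x n + coeff x n = 0" by simp
  then show "coeff (x + x) n = coeff 0 n" unfolding coeff_add by simp
qed

lemma tm0: "tm 0 = 0"
  unfolding tm_def by (simp add: monom_0 one_pCons bitpoly_double)

lemma labels_eq_fst: "labels w = fst ` set w"
  by (simp add: labels_def)

lemma Q_R1:
  assumes "R1_move w w'"
  shows "Q w = Q w'"
proof -
  obtain u v c ov s where w: "w = u @ v" and c: "c \<notin> labels w"
    and w': "w' = u @ [(c, ov, s), (c, \<not> ov, s)] @ v"
    using assms unfolding R1_move_def by blast
  have cu: "c \<notin> fst ` set u" and cv: "c \<notin> fst ` set v" using c w by (auto simp: labels_eq_fst)
  have lab: "labels w' = insert c (labels w)" using w w' by auto
  have arcc: "arc w' c = []" unfolding w' using cu by (simp add: arc_skip arc_hit)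
  have "Vs (arc w' d) = Vs (arc w d)" if d: "d \<in> labels w" for d
  proof -
    have "d \<noteq> c" using c d by auto
    then have "Vs (arc (u @ [(c, ov, s), (c, \<not> ov, s)] @ v) d) = Vs (arc (u @ [] @ v) d)"
      by (intro piece) (auto simp: sgnval_def)
    then show ?thesis unfolding w' w by simp
  qed
  then have "Q w' = tm 0 + Q w"
    unfolding Q_def lab using c arcc by (simp add: sum.insert)
  then show ?thesis by (simp add: tm0)
qed

lemma Q_R2:
  assumes "R2_move w w'"
  shows "Q w = Q w'"
proof -
  obtain u v x c d s where w: "w = u @ v @ x" and cd: "c \<noteq> d" and c: "c \<notin> labels w" and d: "d \<notin> labels w"
    and w': "w' = u @ [(c, True, s), (d, True, \<not> s)] @ v @ [(c, False, s), (d, False, \<not> s)] @ x \<or>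
             w' = u @ [(c, True, s), (d, True, \<not> s)] @ v @ [(d, False, \<not> s), (c, False, s)] @ x"
    using assms unfolding R2_move_def by blast
  define B1 :: gword where "B1 = [(c, True, s), (d, True, \<not> s)]"
  obtain B2 :: gword where B2: "B2 = [(c, False, s), (d, False, \<not> s)] \<or> B2 = [(d, False, \<not> s), (c, False, s)]"
    and w'': "w' = u @ B1 @ v @ B2 @ x"
    using w' unfolding B1_def by blast
  have cu: "c \<notin> fst ` set u" "c \<notin> fst ` set v" "c \<notin> fst ` set x"
    using c w by (auto simp: labels_eq_fst)
  have du: "d \<notin> fst ` set u" "d \<notin> fst ` set v" "d \<notin> fst ` set x"
    using d w by (auto simp: labels_eq_fst)
  have lab: "labels w' = insert c (insert d (labels w))" using w w'' B2 unfolding B1_def by auto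
  have VB1: "Vs B1 = 0" unfolding B1_def by (cases s) auto
  have VB2: "Vs B2 = 0" using B2 by (cases s) auto
  have lB1: "fst ` set B1 = {c, d}" unfolding B1_def by auto
  have lB2: "fst ` set B2 = {c, d}" using B2 by auto
  have "Vs (arc w' e) = Vs (arc w e)" if e: "e \<in> labels w" for e
  proof -
    have ec: "e \<noteq> c" "e \<noteq> d" using c d e by auto
    have "Vs (arc (u @ B1 @ (v @ B2 @ x)) e) = Vs (arc (u @ [] @ (v @ B2 @ x)) e)"
      using ec lB1 VB1 by (intro piece) auto
    moreover have "Vs (arc ((u @ v) @ B2 @ x) e) = Vs (arc ((u @ v) @ [] @ x) e)"
      using ec lB2 VB2 by (intro piece) auto
    ultimately show ?thesis unfolding w'' w by simp
  qed
  moreover have "Vs (arc w' c) = Vs (arc w' d)"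
    using B2 unfolding w'' B1_def using cu du cd
    by (cases s; auto simp: arc_skip arc_hit arc_Cons_skip tw_skip)
  ultimately have "Q w' = tm (nat \<bar>Vs (arc w' d)\<bar>) + tm (nat \<bar>Vs (arc w' d)\<bar>) + Q w"
    unfolding Q_def lab using c d cd by (simp add: sum.insert add.assoc)
  then show ?thesis by (simp add: bitpoly_double)
qed

lemma r3_labels:
  assumes "r3_pairs om tT tM tB a b c = (PT, PM, PB)"
  shows "fst ` set PT \<subseteq> {a,b,c}" "fst ` set PM \<subseteq> {a,b,c}" "fst ` set PB \<subseteq> {a,b,c}"
  using assms by (cases om; cases tT; cases tM; cases tB; auto simp: r3_pairs_def Let_def)+

lemma r3_count:
  assumes "r3_pairs om tT tM tB a b c = (PT, PM, PB)" "a \<noteq> b" "a \<noteq> c" "b \<noteq> c" "e \<in> {a,b,c}"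
  shows "length (filter (\<lambda>l. fst l = e) (PT @ PM @ PB)) = 2"
  using assms by (cases om; cases tT; cases tM; cases tB; auto simp: r3_pairs_def Let_def)

lemma Q_R3:
  assumes wf: "wf_gauss w" and "R3_move w w'"
  shows "Q w = Q w'"
proof -
  obtain u v y z X Y Z om tT tM tB a b c PT PM PB where
    ne: "a \<noteq> b" "a \<noteq> c" "b \<noteq> c" and r3: "r3_pairs om tT tM tB a b c = (PT, PM, PB)"
    and ms: "mset [X, Y, Z] = mset [PT, PM, PB]"
    and w: "w = u @ X @ v @ Y @ y @ Z @ z"
    and w': "w' = u @ rev X @ v @ rev Y @ y @ rev Z @ z"
    using assms(2) unfolding R3_move_def by blast
  have perm: "(X,Y,Z) \<in> {(PT,PM,PB),(PT,PB,PM),(PM,PT,PB),(PM,PB,PT),(PB,PT,PM),(PB,PM,PT)}"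
    using perm3[OF ms] by auto
  have lab: "labels w' = labels w" unfolding w w' by (simp add: labels_eq_fst)
  have msXYZ: "mset (X @ Y @ Z) = mset (PT @ PM @ PB)" using perm by auto
  have labX: "fst ` set X \<subseteq> {a,b,c}" "fst ` set Y \<subseteq> {a,b,c}" "fst ` set Z \<subseteq> {a,b,c}"
    using perm r3_labels[OF r3] by auto
  have cnt: "length (filter (\<lambda>l. fst l = e) (X @ Y @ Z)) = 2" if e: "e \<in> {a,b,c}" for e
  proof -
    have "length (filter (\<lambda>l. fst l = e) (X @ Y @ Z)) = size (filter_mset (\<lambda>l. fst l = e) (mset (X @ Y @ Z)))"
      by (metis mset_filter size_mset)
    also have "\<dots> = size (filter_mset (\<lambda>l. fst l = e) (mset (PT @ PM @ PB)))" unfolding msXYZ ..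
    also have "\<dots> = length (filter (\<lambda>l. fst l = e) (PT @ PM @ PB))"
      by (metis mset_filter size_mset)
    finally show ?thesis using r3_count[OF r3 ne e] by simp
  qed
  have notin: "e \<notin> fst ` set u \<and> e \<notin> fst ` set v \<and> e \<notin> fst ` set y \<and> e \<notin> fst ` set z"
    if e: "e \<in> {a,b,c}" for e
  proof -
    have "filter (\<lambda>l. fst l = e) (X @ Y @ Z) \<noteq> []" using cnt[OF e] by (intro notI) simp
    then obtain l where "l \<in> set (X @ Y @ Z)" "fst l = e" by (auto simp: filter_empty_conv)
    then have "e \<in> labels w" unfolding w labels_eq_fst by force
    then have "length (filter (\<lambda>l. fst l = e) w) = 2" by (rule count2[OF wf])
    then have "length (filter (\<lambda>l. fst l = e) u) + length (filter (\<lambda>l. fst l = e) v)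
        + length (filter (\<lambda>l. fst l = e) y) + length (filter (\<lambda>l. fst l = e) z) = 0"
      using cnt[OF e] unfolding w filter_append length_append by linarith
    then show ?thesis by (auto simp: filter_empty_conv)
  qed
  have "Vs (arc w d) = Vs (arc w' d)" if d: "d \<in> labels w" for d
  proof (cases "d \<in> {a,b,c}")
    case True
    show ?thesis unfolding w w'
      by (rule R3_abc[OF ne r3 perm _ _ _ _ _ _ _ _ _ _ _ _ True])
         (use notin[of a] notin[of b] notin[of c] in auto)
  next
    case False
    have nX: "d \<notin> fst ` set X" "d \<notin> fst ` set Y" "d \<notin> fst ` set Z" using labX False by auto
    have 1: "Vs (arc (u @ X @ (v @ Y @ y @ Z @ z)) d) = Vs (arc (u @ rev X @ (v @ Y @ y @ Z @ z)) d)"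
      using nX by (intro piece) auto
    have 2: "Vs (arc ((u @ rev X @ v) @ Y @ (y @ Z @ z)) d) = Vs (arc ((u @ rev X @ v) @ rev Y @ (y @ Z @ z)) d)"
      using nX by (intro piece) auto
    have 3: "Vs (arc ((u @ rev X @ v @ rev Y @ y) @ Z @ z) d) = Vs (arc ((u @ rev X @ v @ rev Y @ y) @ rev Z @ z) d)"
      using nX by (intro piece) auto
    show ?thesis using 1 2 3 unfolding w w' by simp
  qed
  then show ?thesis unfolding Q_def lab by simp
qed

lemma step_inv:
  assumes "homotopy_step x y"
  shows "p_t_mod2 x = p_t_mod2 y"
proof -
  have wf: "wf_gauss x" "wf_gauss y" using assms unfolding homotopy_step_def by auto
  have "Q x = Q y"
    using assms unfolding homotopy_step_def
    using Q_rot[OF wf(1)] Q_rename Q_R1 Q_R2 Q_R3[OF wf(1)] Q_cc by blast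
  then show ?thesis using p_t_mod2_Q[OF wf(1)] p_t_mod2_Q[OF wf(2)] by simp
qed

theorem mainTheorem3:
  fixes K1 K2 :: gword
  assumes "homotopic K1 K2"
  shows "p_t_mod2 K1 = p_t_mod2 K2"
proof -
  have "(symclp homotopy_step)\<^sup>*\<^sup>* K1 K2" using assms unfolding homotopic_def equivclp_def .
  then show ?thesis
  proof (induction rule: rtranclp_induct)
    case base then show ?case by simp
  next
    case (step y z)
    then show ?case using step_inv unfolding symclp_def by metis
  qed
qed

end
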